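(* Let $\mu$ be a stationary ergodic process on $[0,1]^{\mathbb N}$. For every $m\in\mathbb N$, \[\lim_{n,\ell\to\infty}\alpha_n^{\ell}(m)=\alpha(m).\]
   Context: Setting: $\mathscr X=[0,1]$ with its Borel $\sigma$-algebra; a process is a probability measure $\mu$ on $\mathscr X^{\mathbb N}$ (product Borel $\sigma$-algebra), $X_t$ the $t$-th coordinate. For $\sigma$-subalgebras $\mathfrak U,\mathfrak V$, $\alpha(\mathfrak U,\mathfrak V):=\sup_{U\in\mathfrak U,V\in\mathfrak V}|\mu(U\cap V)-\mu(U)\mu(V)|$, and the $\alpha$-mixing coefficients are $\alpha(m):=\sup_{j\in\mathbb N}\alpha\big(\sigma(X_1,\dots,X_j),\sigma(X_t:t\ge j+m)\big)$, $m\in\mathbb N$. Dyadic sets: for $\ell\in\mathbb N$ let $I_{\ell,i}=[i2^{-\ell},(i+1)2^{-\ell})$, $i=0,\dots,2^\ell-1$ (last interval closed, so they partition $[0,1]$); $\Delta_{k,\ell}$ is the set of the $2^{k\ell}$ cubes $I_{\ell,i_1}\times\cdots\times I_{\ell,i_k}\subseteq[0,1]^k$, and $\mathcal D_{k,\ell}$ is the family of all unions of cubes in $\Delta_{k,\ell}$. For $m,\ell\in\mathbb N$, $n>m$, $j\in\{1,\dots,n-m\}$, $j':=n-m-j+1$: \[\alpha_{n,j}^{\ell}(m):=\max_{A\in\mathcal D_{j,\ell},\,B\in\mathcal D_{j',\ell}}\Big|\mu\big((X_1,\dots,X_j)\in A,\ (X_{j+m},\dots,X_n)\in B\big)-\mu\big((X_1,\dots,X_j)\in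 A\big)\mu\big((X_{j+m},\dots,X_n)\in B\big)\Big|,\] and $\alpha_n^{\ell}(m):=\max_{j\in\{1,\dots,n-m\}}\alpha_{n,j}^{\ell}(m)$. The limit is the joint limit as both $n$ and $\ell$ tend to infinity. *)

theory Defs
  imports "HOL-Probability.Probability"
begin

text \<open>A process is a probability measure on sequences \<open>\<omega> :: nat \<Rightarrow> real\<close>
  with values in [0,1]. The paper's coordinate \<open>X_t\<close> (t = 1,2,...) is \<open>\<omega> (t - 1)\<close>.\<close>

definition coord :: "nat \<Rightarrow> (nat \<Rightarrow> real) \<Rightarrow> real" where
  "coord t \<omega> = \<omega> (t - 1)"

definition seq_space :: "(nat \<Rightarrow> real) measure" where
  "seq_space = (\<Pi>\<^sub>M i\<in>UNIV. restrict_space borel {0..1::real})"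

definition shift :: "(nat \<Rightarrow> real) \<Rightarrow> (nat \<Rightarrow> real)" where
  "shift \<omega> = (\<lambda>i. \<omega> (Suc i))"

definition stationary :: "(nat \<Rightarrow> real) measure \<Rightarrow> bool" where
  "stationary M \<longleftrightarrow> shift \<in> measurable M M \<and> distr M M shift = M"

definition ergodic :: "(nat \<Rightarrow> real) measure \<Rightarrow> bool" where
  "ergodic M \<longleftrightarrow> (\<forall>A\<in>sets M. shift -` A \<inter> space M = A \<longrightarrow> measure M A = 0 \<or> measure M A = 1)"

definition sigma_gen :: "(nat \<Rightarrow> real) measure \<Rightarrow> nat set \<Rightarrow> (nat \<Rightarrow> real) set set" where
  "sigma_gen M I = sigma_sets (space M)
     (\<Union>t\<in>I. {coord t -` B \<inter> space M | B. B \<in> sets borel})"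

definition alpha_sigma :: "(nat \<Rightarrow> real) measure \<Rightarrow> (nat \<Rightarrow> real) set set \<Rightarrow> (nat \<Rightarrow> real) set set \<Rightarrow> real" where
  "alpha_sigma M U V = (SUP p\<in>U \<times> V.
      \<bar>measure M (fst p \<inter> snd p) - measure M (fst p) * measure M (snd p)\<bar>)"

definition alpha_mix :: "(nat \<Rightarrow> real) measure \<Rightarrow> nat \<Rightarrow> real" where
  "alpha_mix M m = (SUP j\<in>{1..}. alpha_sigma M (sigma_gen M {1..j}) (sigma_gen M {j+m..}))"

definition dyad :: "nat \<Rightarrow> nat \<Rightarrow> real set" where
  "dyad l i = (if i = 2^l - 1 then {real i / 2^l .. (real i + 1) / 2^l}
               else {real i / 2^l ..< (real i + 1) / 2^l})"

text \<open>Points of [0,1]^k are represented as functions on {1..k} (extensional).\<close>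
definition dyad_cubes :: "nat \<Rightarrow> nat \<Rightarrow> (nat \<Rightarrow> real) set set" where
  "dyad_cubes k l = {(\<Pi>\<^sub>E q\<in>{1..k}. dyad l (c q)) | c. c \<in> {1..k} \<rightarrow>\<^sub>E {0..<2^l}}"

definition dyad_sets :: "nat \<Rightarrow> nat \<Rightarrow> (nat \<Rightarrow> real) set set" where
  "dyad_sets k l = {\<Union>C | C. C \<subseteq> dyad_cubes k l}"

definition block :: "nat \<Rightarrow> nat \<Rightarrow> (nat \<Rightarrow> real) \<Rightarrow> (nat \<Rightarrow> real)" where
  "block s k \<omega> = (\<lambda>q\<in>{1..k}. coord (s + q - 1) \<omega>)"

definition alpha_dyad_nj :: "(nat \<Rightarrow> real) measure \<Rightarrow> nat \<Rightarrow> nat \<Rightarrow> nat \<Rightarrow> nat \<Rightarrow> real" where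
  "alpha_dyad_nj M l m n j =
     (let j' = n - m - j + 1;
          EA = (\<lambda>A. {\<omega>\<in>space M. block 1 j \<omega> \<in> A});
          EB = (\<lambda>B. {\<omega>\<in>space M. block (j + m) j' \<omega> \<in> B})
      in Max ((\<lambda>(A, B). \<bar>measure M (EA A \<inter> EB B) - measure M (EA A) * measure M (EB B)\<bar>)
               ` (dyad_sets j l \<times> dyad_sets j' l)))"

definition alpha_dyad :: "(nat \<Rightarrow> real) measure \<Rightarrow> nat \<Rightarrow> nat \<Rightarrow> nat \<Rightarrow> real" where
  "alpha_dyad M l m n = Max ((\<lambda>j. alpha_dyad_nj M l m n j) ` {1..n - m})"

end

theory Submission
  imports Defs
begin

definition idx :: "nat \<Rightarrow> real \<Rightarrow> nat" where
  "idx l x = min (nat \<lfloor>x * 2^l\<rfloor>) (2^l - 1)"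

lemma idx_less: "idx l x < 2^l"
  unfolding idx_def by (simp add: min.strict_coboundedI2)

lemma natpow2: "nat ((2::int)^l) = 2^l"
  by (metis nat_int of_nat_numeral of_nat_power)

lemma idx1: "idx l 1 = 2^l - 1"
  unfolding idx_def by (simp add: natpow2)

lemma idx_lt1:
  assumes "0 \<le> x" "x < 1"
  shows "idx l x = nat \<lfloor>x * 2^l\<rfloor>"
proof -
  have "x * 2^l < 2^l" using assms by simp
  then have fl: "\<lfloor>x * 2^l\<rfloor> < 2^l" by (simp add: floor_less_iff)
  then have "nat \<lfloor>x * 2^l\<rfloor> < nat (2^l)" using assms by (simp add: nat_less_eq_zless)
  then have "nat \<lfloor>x * 2^l\<rfloor> < 2^l" by (simp only: natpow2)
  then have le: "nat \<lfloor>x * 2^l\<rfloor> \<le> 2^l - 1" by linarith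
  show ?thesis unfolding idx_def using le by (rule min.absorb1)
qed

lemma idx_mem:
  assumes "0 \<le> x" "x \<le> 1"
  shows "x \<in> dyad l (idx l x)"
proof (cases "x = 1")
  case True
  have "idx l x = 2^l - 1" using True idx1 by simp
  then show ?thesis using True unfolding dyad_def
    by (simp add: of_nat_diff field_simps)
next
  case False
  then have x1: "x < 1" using assms by simp
  have "x * 2^l < 2^l" using x1 by simp
  then have fl: "\<lfloor>x * 2^l\<rfloor> < 2^l" by (simp add: floor_less_iff)
  have fl0: "0 \<le> \<lfloor>x * 2^l\<rfloor>" using assms by simp
  have i: "idx l x = nat \<lfloor>x * 2^l\<rfloor>" using idx_lt1 assms x1 by simp
  have r: "real (nat \<lfloor>x * 2^l\<rfloor>) = of_int \<lfloor>x * 2^l\<rfloor>" using fl0 by simp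
  have a: "real (idx l x) \<le> x * 2^l" using i r by simp
  have b: "x * 2^l < real (idx l x) + 1" using i r by linarith
  show ?thesis unfolding dyad_def using a b
    by (auto simp: field_simps)
qed

lemma idx_unique:
  assumes "0 \<le> x" "x \<le> 1" "i < 2^l" "x \<in> dyad l i"
  shows "i = idx l x"
proof (cases "i = 2^l - 1")
  case True
  then have "real i / 2^l \<le> x" using assms(4) unfolding dyad_def by auto
  then have "real i \<le> x * 2^l" by (simp add: field_simps)
  then have "int i \<le> \<lfloor>x * 2^l\<rfloor>" by (simp add: le_floor_iff)
  then have "i \<le> nat \<lfloor>x * 2^l\<rfloor>" by linarith
  then show ?thesis using True unfolding idx_def by (simp add: min_def)
next
  case False
  then have "real i / 2^l \<le> x" "x < (real i + 1) / 2^l" using assms(4) unfolding dyad_def by auto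
  then have "real i \<le> x * 2^l" "x * 2^l < real i + 1" by (simp_all add: field_simps)
  then have "\<lfloor>x * 2^l\<rfloor> = int i" by (simp add: floor_eq_iff)
  then show ?thesis using False assms(3) unfolding idx_def by auto
qed

lemma divaux: "0 < d \<Longrightarrow> r < d \<Longrightarrow> ((a::nat)*d + r) div d = a" by simp

lemma idx_div:
  assumes "0 \<le> x" "x \<le> 1" "l \<le> l'"
  shows "idx l' x div 2^(l'-l) = idx l x"
proof (cases "x = 1")
  case True
  have "(2^l' - 1) div (2^(l'-l)::nat) = 2^l - 1"
  proof -
    have e: "(2::nat)^l' = 2^l * 2^(l'-l)" using assms(3) by (simp flip: power_add)
    have p: "(0::nat) < 2^(l'-l)" by simp
    define d :: nat where "d = 2^(l'-l)"
    have d0: "0 < d" unfolding d_def by simp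
    have "(2::nat)^l' - 1 = (2^l - 1) * d + (d - 1)"
      using e d0 unfolding d_def[symmetric] by (simp add: algebra_simps)
    moreover have "((2^l - 1) * d + (d - 1)) div d = 2^l - 1"
      using d0 divaux[of d "d - 1" "2^l - 1"] by simp
    ultimately show ?thesis unfolding d_def by simp
  qed
  then show ?thesis using True idx1 by simp
next
  case False
  then have x1: "x < 1" using assms by simp
  have fl: "\<And>l. \<lfloor>x * 2^l\<rfloor> < 2^l" using x1 by (simp add: floor_less_iff)
  have fl0: "\<And>l. 0 \<le> \<lfloor>x * 2^l\<rfloor>" using assms by simp
  have i: "\<And>l. idx l x = nat \<lfloor>x * 2^l\<rfloor>" using idx_lt1 assms x1 by simp
  have "x * 2^l = x * 2^l' / real_of_int (2^(l'-l))" using assms(3)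
    by (simp add: field_simps flip: power_add)
  then have "\<lfloor>x * 2^l\<rfloor> = \<lfloor>x * 2^l'\<rfloor> div 2^(l'-l)"
    by (simp add: floor_divide_real_eq_div del: of_int_power)
  then show ?thesis using i fl0
    by (simp add: nat_div_distrib natpow2)
qed

lemma approx_sigma:
  fixes C :: "nat \<Rightarrow> _ set"
  assumes P: "prob_space M"
  and Csub: "\<And>k. C k \<subseteq> sets M"
  and Cemp: "\<And>k. {} \<in> C k"
  and Ccomp: "\<And>k A. A \<in> C k \<Longrightarrow> space M - A \<in> C k"
  and Cun: "\<And>k A B. A \<in> C k \<Longrightarrow> B \<in> C k \<Longrightarrow> A \<union> B \<in> C k"
  and Cmono: "\<And>k k'. k \<le> k' \<Longrightarrow> C k \<subseteq> C k'"
  and W: "W \<in> sigma_sets (space M) (\<Union>k. C k)"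
  shows "\<forall>e>0. \<exists>K. \<forall>k\<ge>K. \<exists>W'\<in>C k. measure M ((W - W') \<union> (W' - W)) < e"
proof -
  have SS: "sigma_sets (space M) (\<Union>k. C k) \<subseteq> sets M"
    using Csub by (intro sets.sigma_sets_subset) auto
  show ?thesis using W
proof (induction rule: sigma_sets.induct)
  case (Basic a)
  then obtain k0 where "a \<in> C k0" by auto
  then have "\<forall>k\<ge>k0. a \<in> C k" using Cmono by blast
  then show ?case by force
next
  case Empty
  then show ?case using Cemp by force
next
  case (Compl a)
  show ?case
  proof (intro allI impI)
    fix e :: real assume e: "e > 0"
    obtain K where K: "\<forall>k\<ge>K. \<exists>W'\<in>C k. measure M ((a - W') \<union> (W' - a)) < e"
      using Compl.IH e by blast
    have "\<forall>k\<ge>K. \<exists>W'\<in>C k. measure M (((space M - a) - W') \<union> (W' - (space M - a))) < e"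
    proof (intro allI impI)
      fix k assume "k \<ge> K"
      then obtain W' where W': "W' \<in> C k" "measure M ((a - W') \<union> (W' - a)) < e" using K by blast
      have Ws: "W' \<in> sets M" using W' Csub by blast
      have as: "a \<in> sets M" using Compl.hyps SS by blast
      have eq: "((space M - a) - (space M - W')) \<union> ((space M - W') - (space M - a)) \<subseteq> (a - W') \<union> (W' - a)"
        by blast
      have "measure M (((space M - a) - (space M - W')) \<union> ((space M - W') - (space M - a))) \<le> measure M ((a - W') \<union> (W' - a))"
        using eq as Ws P by (intro finite_measure.finite_measure_mono) (auto simp: prob_space_def)
      then show "\<exists>W'\<in>C k. measure M (((space M - a) - W') \<union> (W' - (space M - a))) < e"
        using W' Ccomp by (intro bexI[of _ "space M - W'"]) auto
    qed
    then show "\<exists>K. \<forall>k\<ge>K. \<exists>W'\<in>C k. measure M (((space M - a) - W') \<union> (W' - (space M - a))) < e" by blast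
  qed
next
  case (Union a)
  interpret fm: finite_measure M using P by (simp add: prob_space_def)
  have as: "\<And>i. a i \<in> sets M" using Union.hyps SS by blast
  show ?case
  proof (intro allI impI)
    fix e :: real assume e: "e > 0"
    define A where "A n = (\<Union>i<n. a i)" for n
    have Asets: "\<And>n. A n \<in> sets M" unfolding A_def using as by auto
    have inc: "incseq A" unfolding A_def incseq_def by (meson UN_mono lessThan_subset_iff order_refl)
    have UA: "(\<Union>n. A n) = (\<Union>i. a i)" unfolding A_def by auto
    have lim: "(\<lambda>n. measure M (A n)) \<longlonglongrightarrow> measure M (\<Union>i. a i)"
      using fm.finite_Lim_measure_incseq[of A] Asets inc UA by auto
    obtain n0 where n0: "\<forall>n\<ge>n0. norm (measure M (A n) - measure M (\<Union>i. a i)) < e/2"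
      using LIMSEQ_D[OF lim, of "e/2"] e by auto
    define n where "n = n0"
    have n: "\<bar>measure M (A n) - measure M (\<Union>i. a i)\<bar> < e/2"
      using n0 unfolding n_def by auto
    define d where "d = e / (2 * (real n + 1))"
    have d0: "d > 0" unfolding d_def using e by simp
    have "\<forall>i. \<exists>K. \<forall>k\<ge>K. \<exists>W'\<in>C k. measure M (sym_diff (a i) W') < d"
      using Union.IH d0 by blast
    from choice[OF this] obtain Kf where Kf0: "\<forall>i. \<forall>k\<ge>Kf i. \<exists>W'\<in>C k. measure M (sym_diff (a i) W') < d"
      by blast
    have Kf: "\<And>i k. k \<ge> Kf i \<Longrightarrow> \<exists>W'\<in>C k. measure M (sym_diff (a i) W') < d"
      using Kf0 by blast
    define K where "K = (\<Sum>i<n. Kf i)"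
    have "\<forall>k\<ge>K. \<exists>W'\<in>C k. measure M (sym_diff (\<Union>i. a i) W') < e"
    proof (intro allI impI)
      fix k assume k: "k \<ge> K"
      have "\<forall>i. \<exists>W'. i < n \<longrightarrow> W' \<in> C k \<and> measure M (sym_diff (a i) W') < d"
      proof (intro allI)
        fix i show "\<exists>W'. i < n \<longrightarrow> W' \<in> C k \<and> measure M (sym_diff (a i) W') < d"
        proof (cases "i < n")
          case True
          then have "Kf i \<le> K" unfolding K_def by (intro member_le_sum) auto
          then show ?thesis using Kf k by (meson order_trans)
        qed simp
      qed
      from choice[OF this] obtain Wf where Wf0: "\<forall>i. i < n \<longrightarrow> Wf i \<in> C k \<and> measure M (sym_diff (a i) (Wf i)) < d"
        by blast
      have Wf: "\<And>i. i < n \<Longrightarrow> Wf i \<in> C k"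
        "\<And>i. i < n \<Longrightarrow> measure M (sym_diff (a i) (Wf i)) < d" using Wf0 by auto
      define W' where "W' = (\<Union>i<n. Wf i)"
      have "\<forall>m\<le>n. (\<Union>i<m. Wf i) \<in> C k"
      proof (intro allI impI)
        fix m assume "m \<le> n" then show "(\<Union>i<m. Wf i) \<in> C k"
        proof (induction m)
          case 0 then show ?case using Cemp by simp
        next
          case (Suc m)
          have "(\<Union>i<Suc m. Wf i) = Wf m \<union> (\<Union>i<m. Wf i)" by (simp add: lessThan_Suc)
          then show ?case using Suc Wf(1) Cun by simp
        qed
      qed
      then have W'C: "W' \<in> C k" unfolding W'_def by simp
      have Wfs: "\<And>i. i < n \<Longrightarrow> Wf i \<in> sets M" using Wf(1) Csub by blast
      have W's: "W' \<in> sets M" using W'C Csub by blast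
      have sub: "sym_diff (\<Union>i. a i) W' \<subseteq> ((\<Union>i. a i) - A n) \<union> (\<Union>i<n. sym_diff (a i) (Wf i))"
        unfolding W'_def A_def by blast
      have s1: "(\<Union>i. a i) - A n \<in> sets M" using as Asets by auto
      have s2: "(\<Union>i<n. sym_diff (a i) (Wf i)) \<in> sets M" using as Wfs by auto
      have m1: "measure M (sym_diff (\<Union>i. a i) W') \<le> measure M (((\<Union>i. a i) - A n) \<union> (\<Union>i<n. sym_diff (a i) (Wf i)))"
        using sub s1 s2 by (intro fm.finite_measure_mono) auto
      have m2: "measure M (((\<Union>i. a i) - A n) \<union> (\<Union>i<n. sym_diff (a i) (Wf i))) \<le> measure M ((\<Union>i. a i) - A n) + measure M (\<Union>i<n. sym_diff (a i) (Wf i))"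
        using s1 s2 by (intro measure_subadditive) auto
      have m3: "measure M ((\<Union>i. a i) - A n) = measure M (\<Union>i. a i) - measure M (A n)"
        using as Asets by (intro fm.finite_measure_Diff) (auto simp: A_def)
      have m4: "measure M (\<Union>i<n. sym_diff (a i) (Wf i)) \<le> (\<Sum>i<n. measure M (sym_diff (a i) (Wf i)))"
        using as Wfs by (intro measure_UNION_le) auto
      have m5: "(\<Sum>i<n. measure M (sym_diff (a i) (Wf i))) \<le> (\<Sum>i<n. d)"
        using Wf(2) by (intro sum_mono) (simp add: less_imp_le)
      have m6: "(\<Sum>i<n. d) = real n * d" by simp
      have m7: "real n * d < e / 2" unfolding d_def using e
        by (simp add: field_simps)
      have "measure M (sym_diff (\<Union>i. a i) W') < e" using n m1 m2 m3 m4 m5 m6 m7 by linarith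
      then show "\<exists>W'\<in>C k. measure M (sym_diff (\<Union>i. a i) W') < e" using W'C by blast
    qed
    then show "\<exists>K. \<forall>k\<ge>K. \<exists>W'\<in>C k. measure M (sym_diff (\<Union>i. a i) W') < e" by blast
  qed
qed
qed

definition ivec :: "nat \<Rightarrow> nat \<Rightarrow> nat \<Rightarrow> (nat \<Rightarrow> real) \<Rightarrow> (nat \<Rightarrow> nat)" where
  "ivec s k l \<omega> = (\<lambda>q\<in>{1..k}. idx l (coord (s + q - 1) \<omega>))"

definition ev :: "(nat \<Rightarrow> real) measure \<Rightarrow> nat \<Rightarrow> nat \<Rightarrow> nat \<Rightarrow> (nat \<Rightarrow> nat) set \<Rightarrow> (nat \<Rightarrow> real) set" where
  "ev M s k l S = {\<omega>\<in>space M. ivec s k l \<omega> \<in> S}"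

definition G :: "(nat \<Rightarrow> real) measure \<Rightarrow> nat \<Rightarrow> nat \<Rightarrow> nat \<Rightarrow> (nat \<Rightarrow> real) set set" where
  "G M s k l = range (ev M s k l)"

definition idxset :: "nat \<Rightarrow> nat \<Rightarrow> (nat \<Rightarrow> nat) set" where
  "idxset k l = {1..k} \<rightarrow>\<^sub>E {0..<2^l}"

definition cube :: "nat \<Rightarrow> nat \<Rightarrow> (nat \<Rightarrow> nat) \<Rightarrow> (nat \<Rightarrow> real) set" where
  "cube k l c = (\<Pi>\<^sub>E q\<in>{1..k}. dyad l (c q))"

lemma space_seq: "space seq_space = (\<Pi>\<^sub>E i\<in>UNIV. {0..1::real})"
  unfolding seq_space_def by (simp add: space_PiM space_restrict_space)

lemma space_vals:
  assumes "sets M = sets seq_space" "\<omega> \<in> space M"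
  shows "0 \<le> \<omega> i \<and> \<omega> i \<le> 1"
  using assms sets_eq_imp_space_eq[OF assms(1)] space_seq by (auto simp: PiE_iff)

lemma coord_vals:
  assumes "sets M = sets seq_space" "\<omega> \<in> space M"
  shows "0 \<le> coord t \<omega> \<and> coord t \<omega> \<le> 1"
  unfolding coord_def using space_vals[OF assms] .

lemma coord_meas:
  assumes "sets M = sets seq_space"
  shows "coord t \<in> borel_measurable M"
proof -
  have "(\<lambda>\<omega>::nat\<Rightarrow>real. \<omega> (t - 1)) \<in> measurable seq_space (restrict_space borel {0..1::real})"
    unfolding seq_space_def by (rule measurable_component_singleton) simp
  moreover have "(\<lambda>x::real. x) \<in> measurable (restrict_space borel {0..1::real}) borel"
    by (rule measurable_restrict_space1) simp
  ultimately have "(\<lambda>x::real. x) \<circ> (\<lambda>\<omega>::nat\<Rightarrow>real. \<omega> (t - 1)) \<in> measurable seq_space borel"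
    by (rule measurable_comp)
  then have "(\<lambda>\<omega>::nat\<Rightarrow>real. \<omega> (t - 1)) \<in> measurable seq_space borel"
    by (simp add: comp_def)
  then show ?thesis unfolding coord_def measurable_cong_sets[OF assms refl] .
qed

lemma sigma_gen_sub:
  assumes "sets M = sets seq_space"
  shows "sigma_gen M T \<subseteq> sets M"
  unfolding sigma_gen_def
proof (rule sets.sigma_sets_subset)
  show "(\<Union>t\<in>T. {coord t -` B \<inter> space M |B. B \<in> sets borel}) \<subseteq> sets M"
    using coord_meas[OF assms] by (auto simp: measurable_def)
qed

lemma sigma_gen_sa: "sigma_algebra (space M) (sigma_gen M T)"
  unfolding sigma_gen_def by (rule sigma_algebra_sigma_sets) auto

lemma ivec_idxset: "ivec s k l \<omega> \<in> idxset k l"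
  unfolding ivec_def idxset_def using idx_less by auto

lemma dyad_borel: "dyad l i \<in> sets borel"
  unfolding dyad_def by auto

lemma ivec_eq_iff:
  assumes "sets M = sets seq_space" "\<omega> \<in> space M" "c \<in> idxset k l"
  shows "ivec s k l \<omega> = c \<longleftrightarrow> (\<forall>q\<in>{1..k}. coord (s + q - 1) \<omega> \<in> dyad l (c q))"
proof
  assume "ivec s k l \<omega> = c"
  then show "\<forall>q\<in>{1..k}. coord (s + q - 1) \<omega> \<in> dyad l (c q)"
    unfolding ivec_def using idx_mem coord_vals[OF assms(1,2)] by auto
next
  assume h: "\<forall>q\<in>{1..k}. coord (s + q - 1) \<omega> \<in> dyad l (c q)"
  show "ivec s k l \<omega> = c"
  proof (rule ext)
    fix q show "ivec s k l \<omega> q = c q"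
    proof (cases "q \<in> {1..k}")
      case True
      then have "c q < 2^l" using assms(3) unfolding idxset_def by auto
      then show ?thesis unfolding ivec_def using True h idx_unique coord_vals[OF assms(1,2)] by auto
    next
      case False
      then show ?thesis using assms(3) unfolding ivec_def idxset_def by (auto simp: PiE_def extensional_def)
    qed
  qed
qed

lemma block_cube_iff:
  assumes "sets M = sets seq_space" "\<omega> \<in> space M" "c \<in> idxset k l"
  shows "block s k \<omega> \<in> cube k l c \<longleftrightarrow> ivec s k l \<omega> = c"
  unfolding ivec_eq_iff[OF assms] block_def cube_def by (auto simp: PiE_iff)

lemma ev_in_sigma_gen:
  assumes "sets M = sets seq_space" "\<And>q. q \<in> {1..k} \<Longrightarrow> s + q - 1 \<in> T"
  shows "ev M s k l S \<in> sigma_gen M T"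
proof -
  interpret SA: sigma_algebra "space M" "sigma_gen M T" by (rule sigma_gen_sa)
  have eq: "ev M s k l S = {\<omega>\<in>space M. \<exists>c\<in>S \<inter> idxset k l. \<forall>q\<in>{1..k}. coord (s + q - 1) \<omega> \<in> dyad l (c q)}"
  proof (rule set_eqI)
    fix \<omega>
    show "\<omega> \<in> ev M s k l S \<longleftrightarrow> \<omega> \<in> {\<omega>\<in>space M. \<exists>c\<in>S \<inter> idxset k l. \<forall>q\<in>{1..k}. coord (s + q - 1) \<omega> \<in> dyad l (c q)}"
    proof (cases "\<omega> \<in> space M")
      case True
      have "ivec s k l \<omega> \<in> S \<longleftrightarrow> (\<exists>c\<in>S \<inter> idxset k l. ivec s k l \<omega> = c)"
        using ivec_idxset by auto
      also have "\<dots> \<longleftrightarrow> (\<exists>c\<in>S \<inter> idxset k l. \<forall>q\<in>{1..k}. coord (s + q - 1) \<omega> \<in> dyad l (c q))"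
        using ivec_eq_iff[OF assms(1) True] by auto
      finally show ?thesis unfolding ev_def using True by simp
    qed (simp add: ev_def)
  qed
  have single: "{\<omega>\<in>space M. coord (s + q - 1) \<omega> \<in> dyad l (c q)} \<in> sigma_gen M T" if "q \<in> {1..k}" for q c
  proof -
    have "{\<omega>\<in>space M. coord (s + q - 1) \<omega> \<in> dyad l (c q)} = coord (s + q - 1) -` dyad l (c q) \<inter> space M"
      by auto
    moreover have "coord (s + q - 1) -` dyad l (c q) \<inter> space M \<in> (\<Union>t\<in>T. {coord t -` B \<inter> space M |B. B \<in> sets borel})"
      using assms(2)[OF that] dyad_borel by blast
    ultimately show ?thesis unfolding sigma_gen_def by auto
  qed
  have fin: "finite (S \<inter> idxset k l)" unfolding idxset_def by (auto intro: finite_PiE)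
  show ?thesis unfolding eq
    by (intro SA.sets_Collect_finite_Ex SA.sets_Collect_finite_All single fin) auto
qed

lemma idxset_fin: "finite (idxset k l)"
  unfolding idxset_def by (auto intro: finite_PiE)

lemma dyad_cubes_eq: "dyad_cubes k l = cube k l ` idxset k l"
  unfolding dyad_cubes_def cube_def idxset_def by auto

lemma dyad_sets_fin: "finite (dyad_sets k l)"
proof -
  have "dyad_sets k l = Union ` Pow (dyad_cubes k l)"
    unfolding dyad_sets_def by auto
  then show ?thesis using dyad_cubes_eq idxset_fin by simp
qed

lemma dyad_sets_ne: "{} \<in> dyad_sets k l"
  unfolding dyad_sets_def by auto

lemma ev_from_dyad:
  assumes "sets M = sets seq_space" "A \<in> dyad_sets k l"
  shows "\<exists>S. {\<omega>\<in>space M. block s k \<omega> \<in> A} = ev M s k l S"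
proof -
  obtain C where C: "A = \<Union>C" "C \<subseteq> dyad_cubes k l" using assms(2) unfolding dyad_sets_def by auto
  define S where "S = {c\<in>idxset k l. cube k l c \<in> C}"
  have "{\<omega>\<in>space M. block s k \<omega> \<in> A} = ev M s k l S"
  proof (rule set_eqI)
    fix \<omega>
    show "\<omega> \<in> {\<omega>\<in>space M. block s k \<omega> \<in> A} \<longleftrightarrow> \<omega> \<in> ev M s k l S"
    proof (cases "\<omega> \<in> space M")
      case True
      have "block s k \<omega> \<in> A \<longleftrightarrow> (\<exists>c\<in>idxset k l. cube k l c \<in> C \<and> block s k \<omega> \<in> cube k l c)"
        using C dyad_cubes_eq by auto
      also have "\<dots> \<longleftrightarrow> (\<exists>c\<in>idxset k l. cube k l c \<in> C \<and> ivec s k l \<omega> = c)"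
        using block_cube_iff[OF assms(1) True] by auto
      also have "\<dots> \<longleftrightarrow> ivec s k l \<omega> \<in> S"
        unfolding S_def using ivec_idxset by auto
      finally show ?thesis unfolding ev_def using True by simp
    qed (simp add: ev_def)
  qed
  then show ?thesis by blast
qed

lemma dyad_from_ev:
  assumes "sets M = sets seq_space"
  shows "\<exists>A\<in>dyad_sets k l. {\<omega>\<in>space M. block s k \<omega> \<in> A} = ev M s k l S"
proof -
  define A where "A = \<Union>(cube k l ` (S \<inter> idxset k l))"
  have A: "A \<in> dyad_sets k l" unfolding A_def dyad_sets_def dyad_cubes_eq by blast
  have "{\<omega>\<in>space M. block s k \<omega> \<in> A} = ev M s k l S"
  proof (rule set_eqI)
    fix \<omega>
    show "\<omega> \<in> {\<omega>\<in>space M. block s k \<omega> \<in> A} \<longleftrightarrow> \<omega> \<in> ev M s k l S"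
    proof (cases "\<omega> \<in> space M")
      case True
      have "block s k \<omega> \<in> A \<longleftrightarrow> (\<exists>c\<in>S \<inter> idxset k l. block s k \<omega> \<in> cube k l c)"
        unfolding A_def by auto
      also have "\<dots> \<longleftrightarrow> (\<exists>c\<in>S \<inter> idxset k l. ivec s k l \<omega> = c)"
        using block_cube_iff[OF assms(1) True] by auto
      also have "\<dots> \<longleftrightarrow> ivec s k l \<omega> \<in> S"
        using ivec_idxset by auto
      finally show ?thesis unfolding ev_def using True by simp
    qed (simp add: ev_def)
  qed
  then show ?thesis using A by blast
qed

lemma ev_mono:
  assumes "sets M = sets seq_space" "k \<le> k'" "l \<le> l'"
  shows "ev M s k l S = ev M s k' l' {c'. (\<lambda>q\<in>{1..k}. c' q div 2^(l'-l)) \<in> S}"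
proof -
  have "(\<lambda>q\<in>{1..k}. ivec s k' l' \<omega> q div 2^(l'-l)) = ivec s k l \<omega>" if "\<omega> \<in> space M" for \<omega>
  proof (rule ext)
    fix q show "(\<lambda>q\<in>{1..k}. ivec s k' l' \<omega> q div 2^(l'-l)) q = ivec s k l \<omega> q"
      unfolding ivec_def using assms(2) idx_div[OF _ _ assms(3)] coord_vals[OF assms(1) that] by auto
  qed
  then show ?thesis unfolding ev_def by auto
qed

lemma G_mono:
  assumes "sets M = sets seq_space" "k \<le> k'" "l \<le> l'"
  shows "G M s k l \<subseteq> G M s k' l'"
  unfolding G_def using ev_mono[OF assms] by auto

lemma G_empty: "{} \<in> G M s k l"
  unfolding G_def ev_def by (auto intro: range_eqI[of _ _ "{}"])

lemma G_compl: "A \<in> G M s k l \<Longrightarrow> space M - A \<in> G M s k l"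
proof -
  assume "A \<in> G M s k l"
  then obtain S where "A = ev M s k l S" unfolding G_def by auto
  then have "space M - A = ev M s k l (- S)" unfolding ev_def by auto
  then show ?thesis unfolding G_def by auto
qed

lemma G_un: "A \<in> G M s k l \<Longrightarrow> B \<in> G M s k l \<Longrightarrow> A \<union> B \<in> G M s k l"
proof -
  assume "A \<in> G M s k l" "B \<in> G M s k l"
  then obtain S1 S2 where "A = ev M s k l S1" "B = ev M s k l S2" unfolding G_def by auto
  then have "A \<union> B = ev M s k l (S1 \<union> S2)" unfolding ev_def by auto
  then show ?thesis unfolding G_def by auto
qed

lemma G_sets:
  assumes "sets M = sets seq_space"
  shows "G M s k l \<subseteq> sets M"
  using ev_in_sigma_gen[OF assms, of k s UNIV] sigma_gen_sub[OF assms, of UNIV] unfolding G_def by auto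

lemma le_set_ev:
  assumes "s \<le> t" "t < s + k"
  shows "{\<omega>\<in>space M. real (idx l (coord t \<omega>)) / 2^l \<le> a} = ev M s k l {c. real (c (t - s + 1)) / 2^l \<le> a}"
proof -
  have "ivec s k l \<omega> (t - s + 1) = idx l (coord t \<omega>)" for \<omega>
    unfolding ivec_def using assms by auto
  then show ?thesis unfolding ev_def by auto
qed

lemma idx_bounds:
  assumes "0 \<le> x" "x \<le> 1"
  shows "real (idx l x) / 2^l \<le> x \<and> x \<le> (real (idx l x) + 1) / 2^l"
proof -
  have "x \<in> dyad l (idx l x)" by (rule idx_mem[OF assms])
  then show ?thesis unfolding dyad_def by (cases "idx l x = 2^l - 1") auto
qed

lemma coord_le_iff:
  assumes "0 \<le> x" "x \<le> 1"
  shows "x \<le> a \<longleftrightarrow> (\<forall>l. real (idx l x) / 2^l \<le> a)"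
proof
  assume "x \<le> a"
  then show "\<forall>l. real (idx l x) / 2^l \<le> a"
    using idx_bounds[OF assms] by (meson order_trans)
next
  assume h: "\<forall>l. real (idx l x) / 2^l \<le> a"
  show "x \<le> a"
  proof (rule ccontr)
    assume "\<not> x \<le> a"
    then have "x - a > 0" by simp
    then obtain l where l: "(1/2::real)^l < x - a" using real_arch_pow_inv[of "x - a" "1/2"] by auto
    have "x \<le> (real (idx l x) + 1) / 2^l"
      using idx_bounds[OF assms, of l] by blast
    also have "\<dots> = real (idx l x) / 2^l + (1/2)^l" by (simp add: field_simps power_divide)
    also have "\<dots> \<le> a + (1/2)^l" using h by simp
    finally show False using l by simp
  qed
qed

lemma gen_sub:
  assumes "sets M = sets seq_space"
    and Csub: "\<And>k. C k \<subseteq> Pow (space M)"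
    and hC: "\<And>t l a. t \<in> T \<Longrightarrow> \<exists>k. {\<omega>\<in>space M. real (idx l (coord t \<omega>)) / 2^l \<le> a} \<in> C k"
  shows "sigma_gen M T \<subseteq> sigma_sets (space M) (\<Union>k. C k)"
proof -
  define N where "N = sigma (space M) (\<Union>k. C k)"
  have sub: "(\<Union>k. C k) \<subseteq> Pow (space M)" using Csub by auto
  have spN: "space N = space M" unfolding N_def using sub by simp
  have setsN: "sets N = sigma_sets (space M) (\<Union>k. C k)" unfolding N_def using sub by simp
  have meas: "coord t \<in> borel_measurable N" if t: "t \<in> T" for t
  proof (unfold borel_measurable_iff_le, intro allI)
    fix a
    have "{w \<in> space N. coord t w \<le> a} = (\<Inter>l. {\<omega>\<in>space M. real (idx l (coord t \<omega>)) / 2^l \<le> a})"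
    proof (rule set_eqI)
      fix \<omega>
      show "\<omega> \<in> {w \<in> space N. coord t w \<le> a} \<longleftrightarrow> \<omega> \<in> (\<Inter>l. {\<omega>\<in>space M. real (idx l (coord t \<omega>)) / 2^l \<le> a})"
      proof (cases "\<omega> \<in> space M")
        case True
        have h: "0 \<le> coord t \<omega>" "coord t \<omega> \<le> 1" using coord_vals[OF assms(1) True] by auto
        show ?thesis using coord_le_iff[OF h] True unfolding spN by simp
      qed (simp add: spN)
    qed
    also have "\<dots> \<in> sets N"
    proof -
      have each: "{\<omega>\<in>space M. real (idx l (coord t \<omega>)) / 2^l \<le> a} \<in> sets N" for l
      proof -
        obtain k where "{\<omega>\<in>space M. real (idx l (coord t \<omega>)) / 2^l \<le> a} \<in> C k" using hC[OF t] by blast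
        then show ?thesis unfolding setsN by auto
      qed
      show ?thesis using each by (intro sets.countable_INT) auto
    qed
    finally show "{w \<in> space N. coord t w \<le> a} \<in> sets N" .
  qed
  have "(\<Union>t\<in>T. {coord t -` B \<inter> space M |B. B \<in> sets borel}) \<subseteq> sets N"
    using meas unfolding measurable_def spN by auto
  then show ?thesis unfolding sigma_gen_def setsN
    by (intro sigma_algebra.sigma_sets_subset[OF sigma_algebra_sigma_sets[OF sub]]) (simp add: setsN)
qed

definition fd :: "(nat \<Rightarrow> real) measure \<Rightarrow> (nat \<Rightarrow> real) set \<Rightarrow> (nat \<Rightarrow> real) set \<Rightarrow> real" where
  "fd M U V = \<bar>measure M (U \<inter> V) - measure M U * measure M V\<bar>"

lemma fd_le1:
  assumes "prob_space M"
  shows "fd M U V \<le> 1"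
proof -
  interpret prob_space M by fact
  have a: "0 \<le> measure M (U \<inter> V)" "measure M (U \<inter> V) \<le> 1" by auto
  have b: "0 \<le> measure M U" "measure M U \<le> 1" "0 \<le> measure M V" "measure M V \<le> 1" by auto
  have "0 \<le> measure M U * measure M V" "measure M U * measure M V \<le> 1"
    using b by (auto intro: mult_le_one)
  then show ?thesis unfolding fd_def using a by linarith
qed

lemma measure_diff_le:
  assumes "prob_space M" "A \<in> sets M" "B \<in> sets M"
  shows "\<bar>measure M A - measure M B\<bar> \<le> measure M (sym_diff A B)"
proof -
  interpret prob_space M by fact
  have s: "sym_diff A B \<in> sets M" using assms by auto
  have "measure M A \<le> measure M (B \<union> sym_diff A B)" using assms s by (intro finite_measure_mono) auto
  also have "\<dots> \<le> measure M B + measure M (sym_diff A B)" using assms s by (intro measure_subadditive) auto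
  finally have 1: "measure M A \<le> measure M B + measure M (sym_diff A B)" .
  have "measure M B \<le> measure M (A \<union> sym_diff A B)" using assms s by (intro finite_measure_mono) auto
  also have "\<dots> \<le> measure M A + measure M (sym_diff A B)" using assms s by (intro measure_subadditive) auto
  finally have 2: "measure M B \<le> measure M A + measure M (sym_diff A B)" .
  show ?thesis using 1 2 by linarith
qed

lemma absmul:
  assumes "\<bar>x\<bar> \<le> d" "0 \<le> y" "y \<le> (1::real)"
  shows "\<bar>x * y\<bar> \<le> d"
proof -
  have "\<bar>x * y\<bar> = \<bar>x\<bar> * y" using assms(2) by (simp add: abs_mult)
  also have "\<dots> \<le> \<bar>x\<bar> * 1" using assms(3) by (intro mult_left_mono) auto
  finally show ?thesis using assms(1) by simp
qed

lemma fd_perturb: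
  assumes P: "prob_space M" and s: "U \<in> sets M" "V \<in> sets M" "U' \<in> sets M" "V' \<in> sets M"
  shows "fd M U V \<le> fd M U' V' + 2 * (measure M (sym_diff U U') + measure M (sym_diff V V'))"
proof -
  interpret prob_space M by fact
  define dU where "dU = measure M (sym_diff U U')"
  define dV where "dV = measure M (sym_diff V V')"
  have s1: "sym_diff U U' \<in> sets M" "sym_diff V V' \<in> sets M" using s by auto
  have "\<bar>measure M (U \<inter> V) - measure M (U' \<inter> V')\<bar> \<le> measure M (sym_diff (U \<inter> V) (U' \<inter> V'))"
    using s by (intro measure_diff_le[OF P]) auto
  also have "\<dots> \<le> measure M (sym_diff U U' \<union> sym_diff V V')"
    using s1 by (intro finite_measure_mono) auto
  also have "\<dots> \<le> dU + dV" unfolding dU_def dV_def using s1 by (intro measure_subadditive) auto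
  finally have i1: "\<bar>measure M (U \<inter> V) - measure M (U' \<inter> V')\<bar> \<le> dU + dV" .
  have i2: "\<bar>measure M U - measure M U'\<bar> \<le> dU" unfolding dU_def using measure_diff_le[OF P s(1,3)] .
  have i3: "\<bar>measure M V - measure M V'\<bar> \<le> dV" unfolding dV_def using measure_diff_le[OF P s(2,4)] .
  have b: "0 \<le> measure M V" "measure M V \<le> 1" "0 \<le> measure M U'" "measure M U' \<le> 1" by auto
  have e: "measure M U * measure M V - measure M U' * measure M V'
      = (measure M U - measure M U') * measure M V + measure M U' * (measure M V - measure M V')"
    by (simp add: algebra_simps)
  have "\<bar>(measure M U - measure M U') * measure M V\<bar> \<le> dU"
    using absmul[OF i2 b(1,2)] .
  moreover have "\<bar>measure M U' * (measure M V - measure M V')\<bar> \<le> dV"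
    using absmul[OF i3 b(3,4)] by (simp add: mult.commute)
  ultimately have i4: "\<bar>measure M U * measure M V - measure M U' * measure M V'\<bar> \<le> dU + dV"
    unfolding e by linarith
  show ?thesis unfolding fd_def dU_def[symmetric] dV_def[symmetric] using i1 i4 by (simp add: abs_if split: if_splits)
qed

lemma nj_unfold:
  "alpha_dyad_nj M l m n j = Max ((\<lambda>(A, B). fd M {\<omega>\<in>space M. block 1 j \<omega> \<in> A} {\<omega>\<in>space M. block (j + m) (n - m - j + 1) \<omega> \<in> B})
      ` (dyad_sets j l \<times> dyad_sets (n - m - j + 1) l))"
  unfolding alpha_dyad_nj_def Let_def fd_def by simp

lemma fin_nj: "finite ((\<lambda>(A, B). fd M {\<omega>\<in>space M. block 1 j \<omega> \<in> A} {\<omega>\<in>space M. block (j + m) (n - m - j + 1) \<omega> \<in> B})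
      ` (dyad_sets j l \<times> dyad_sets (n - m - j + 1) l))"
  using dyad_sets_fin by auto

lemma ne_nj: "((\<lambda>(A, B). fd M {\<omega>\<in>space M. block 1 j \<omega> \<in> A} {\<omega>\<in>space M. block (j + m) (n - m - j + 1) \<omega> \<in> B})
      ` (dyad_sets j l \<times> dyad_sets (n - m - j + 1) l)) \<noteq> {}"
  using dyad_sets_ne by blast

lemma bdd_sigma:
  fixes M :: "(nat \<Rightarrow> real) measure"
  assumes "prob_space M"
  shows "bdd_above ((\<lambda>p. \<bar>measure M (fst p \<inter> snd p) - measure M (fst p) * measure M (snd p)\<bar>) ` (U \<times> V))"
  using fd_le1[OF assms] unfolding fd_def by (intro bdd_aboveI[of _ 1]) auto

lemma alpha_sigma_le1:
  assumes "prob_space M" "U \<noteq> {}" "V \<noteq> {}"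
  shows "alpha_sigma M U V \<le> 1"
  unfolding alpha_sigma_def using fd_le1[OF assms(1)] assms(2,3) unfolding fd_def
  by (intro cSUP_least) auto

lemma sg_ne: "sigma_gen M T \<noteq> {}"
  unfolding sigma_gen_def using sigma_sets.Empty by blast

lemma bdd_mix:
  assumes "prob_space M"
  shows "bdd_above ((\<lambda>j. alpha_sigma M (sigma_gen M {1..j}) (sigma_gen M {j+m..})) ` {1..})"
  using alpha_sigma_le1[OF assms sg_ne sg_ne] by (intro bdd_aboveI[of _ 1]) auto

lemma fd_le_sigma:
  assumes "prob_space M" "U \<in> UU" "V \<in> VV"
  shows "fd M U V \<le> alpha_sigma M UU VV"
  unfolding alpha_sigma_def fd_def
  using cSUP_upper[OF _ bdd_sigma[OF assms(1), of UU VV], of "(U, V)"] assms(2,3) by auto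

lemma UB:
  assumes P: "prob_space M" and S: "sets M = sets seq_space" and nm: "n > m"
  shows "alpha_dyad M l m n \<le> alpha_mix M m"
proof -
  have each: "alpha_dyad_nj M l m n j \<le> alpha_mix M m" if j: "j \<in> {1..n-m}" for j
  proof -
    have "x \<le> alpha_mix M m" if x: "x \<in> (\<lambda>(A, B). fd M {\<omega>\<in>space M. block 1 j \<omega> \<in> A} {\<omega>\<in>space M. block (j + m) (n - m - j + 1) \<omega> \<in> B})
      ` (dyad_sets j l \<times> dyad_sets (n - m - j + 1) l)" for x
    proof -
      obtain A B where AB: "A \<in> dyad_sets j l" "B \<in> dyad_sets (n - m - j + 1) l"
        "x = fd M {\<omega>\<in>space M. block 1 j \<omega> \<in> A} {\<omega>\<in>space M. block (j + m) (n - m - j + 1) \<omega> \<in> B}"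
        using x by auto
      obtain S1 where S1: "{\<omega>\<in>space M. block 1 j \<omega> \<in> A} = ev M 1 j l S1" using ev_from_dyad[OF S AB(1)] by blast
      obtain S2 where S2: "{\<omega>\<in>space M. block (j + m) (n - m - j + 1) \<omega> \<in> B} = ev M (j + m) (n - m - j + 1) l S2"
        using ev_from_dyad[OF S AB(2)] by blast
      have U: "ev M 1 j l S1 \<in> sigma_gen M {1..j}" by (rule ev_in_sigma_gen[OF S]) auto
      have V: "ev M (j + m) (n - m - j + 1) l S2 \<in> sigma_gen M {j+m..}" by (rule ev_in_sigma_gen[OF S]) auto
      have "x \<le> alpha_sigma M (sigma_gen M {1..j}) (sigma_gen M {j+m..})"
        unfolding AB(3) S1 S2 using fd_le_sigma[OF P U V] .
      also have "\<dots> \<le> alpha_mix M m" unfolding alpha_mix_def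
        using cSUP_upper[OF _ bdd_mix[OF P], of j] j by auto
      finally show ?thesis .
    qed
    then show ?thesis unfolding nj_unfold using fin_nj ne_nj by (simp add: Max_le_iff)
  qed
  show ?thesis unfolding alpha_dyad_def using each nm by (simp add: Max_le_iff)
qed

lemma LB:
  assumes S: "sets M = sets seq_space" and j: "1 \<le> j" "j \<le> n - m"
  shows "fd M (ev M 1 j l S1) (ev M (j + m) (n - m - j + 1) l S2) \<le> alpha_dyad M l m n"
proof -
  obtain A where A: "A \<in> dyad_sets j l" "{\<omega>\<in>space M. block 1 j \<omega> \<in> A} = ev M 1 j l S1"
    using dyad_from_ev[OF S] by blast
  obtain B where B: "B \<in> dyad_sets (n - m - j + 1) l" "{\<omega>\<in>space M. block (j + m) (n - m - j + 1) \<omega> \<in> B} = ev M (j + m) (n - m - j + 1) l S2"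
    using dyad_from_ev[OF S] by blast
  have mem: "fd M {\<omega>\<in>space M. block 1 j \<omega> \<in> A} {\<omega>\<in>space M. block (j + m) (n - m - j + 1) \<omega> \<in> B}
     \<in> (\<lambda>(A, B). fd M {\<omega>\<in>space M. block 1 j \<omega> \<in> A} {\<omega>\<in>space M. block (j + m) (n - m - j + 1) \<omega> \<in> B})
      ` (dyad_sets j l \<times> dyad_sets (n - m - j + 1) l)"
    using A(1) B(1) by (intro image_eqI[of _ _ "(A, B)"]) auto
  have "fd M (ev M 1 j l S1) (ev M (j + m) (n - m - j + 1) l S2) \<le> alpha_dyad_nj M l m n j"
    unfolding nj_unfold using Max_ge[OF fin_nj mem] unfolding A(2) B(2) .
  also have "\<dots> \<le> alpha_dyad M l m n" unfolding alpha_dyad_def using j by (intro Max_ge) auto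
  finally show ?thesis .
qed

lemma arith_aux: "(x::real) \<le> y + D \<Longrightarrow> y \<le> z \<Longrightarrow> D < e/2 \<Longrightarrow> a - e/2 < x \<Longrightarrow> a - e < z"
  by linarith

theorem proposition1:
  fixes M :: "(nat \<Rightarrow> real) measure" and m :: nat
  assumes "prob_space M"
    and "sets M = sets seq_space"
    and "stationary M"
    and "ergodic M"
    and "m \<ge> 1"
  shows "((\<lambda>(n, l). alpha_dyad M l m n) \<longlongrightarrow> alpha_mix M m) (sequentially \<times>\<^sub>F sequentially)"
proof -
  note P = assms(1) and S = assms(2)
  interpret prob_space M by (rule P)
  define \<alpha> where "\<alpha> = alpha_mix M m"
  have main: "\<exists>N. \<forall>l\<ge>N. \<forall>n\<ge>N. dist (alpha_dyad M l m n) \<alpha> < e" if e: "e > 0" for e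
  proof -
    have "\<alpha> - e/2 < \<alpha>" using e by simp
    then obtain j where j: "j \<in> {1..}" "\<alpha> - e/2 < alpha_sigma M (sigma_gen M {1..j}) (sigma_gen M {j+m..})"
      unfolding \<alpha>_def alpha_mix_def using less_cSUP_iff[OF _ bdd_mix[OF P]] by blast
    obtain U V where UV: "U \<in> sigma_gen M {1..j}" "V \<in> sigma_gen M {j+m..}" "\<alpha> - e/2 < fd M U V"
      using j(2) unfolding alpha_sigma_def
      using less_cSUP_iff[OF _ bdd_sigma[OF P, of "sigma_gen M {1..j}" "sigma_gen M {j+m..}"]] sg_ne
      unfolding fd_def by fastforce
    have Gpow: "G M s k l \<subseteq> Pow (space M)" for s k l using G_sets[OF S] sets.sets_into_space by blast
    have Usig: "U \<in> sigma_sets (space M) (\<Union>l. G M 1 j l)"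
    proof -
      have "sigma_gen M {1..j} \<subseteq> sigma_sets (space M) (\<Union>l. G M 1 j l)"
      proof (rule gen_sub[OF S Gpow])
        fix t l a assume t: "t \<in> {1..j}"
        have "{\<omega>\<in>space M. real (idx l (coord t \<omega>)) / 2^l \<le> a} = ev M 1 j l {c. real (c (t - 1 + 1)) / 2^l \<le> a}"
          using le_set_ev[of 1 t j] t by auto
        then show "\<exists>k. {\<omega>\<in>space M. real (idx l (coord t \<omega>)) / 2^l \<le> a} \<in> G M 1 j k"
          unfolding G_def by blast
      qed
      then show ?thesis using UV(1) by blast
    qed
    have "\<forall>e>0. \<exists>K. \<forall>k\<ge>K. \<exists>W'\<in>G M 1 j k. measure M (sym_diff U W') < e"
    proof (rule approx_sigma[where C="G M 1 j", OF P _ _ _ _ _ Usig])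
      show "\<And>k. G M 1 j k \<subseteq> sets M" by (rule G_sets[OF S])
      show "\<And>k. {} \<in> G M 1 j k" by (rule G_empty)
      show "\<And>k A. A \<in> G M 1 j k \<Longrightarrow> space M - A \<in> G M 1 j k" by (rule G_compl)
      show "\<And>k A B. A \<in> G M 1 j k \<Longrightarrow> B \<in> G M 1 j k \<Longrightarrow> A \<union> B \<in> G M 1 j k" by (rule G_un)
      show "\<And>k k'. k \<le> k' \<Longrightarrow> G M 1 j k \<subseteq> G M 1 j k'" by (rule G_mono[OF S order_refl])
    qed
    then obtain K1 where K1: "\<forall>k\<ge>K1. \<exists>W'\<in>G M 1 j k. measure M (sym_diff U W') < e/8"
      using e by (meson divide_pos_pos zero_less_numeral)
    have Vsig: "V \<in> sigma_sets (space M) (\<Union>k. G M (j+m) k k)"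
    proof -
      have "sigma_gen M {j+m..} \<subseteq> sigma_sets (space M) (\<Union>k. G M (j+m) k k)"
      proof (rule gen_sub[OF S Gpow])
        fix t l a assume t: "t \<in> {j+m..}"
        define k0 where "k0 = t - (j + m) + 1"
        have "{\<omega>\<in>space M. real (idx l (coord t \<omega>)) / 2^l \<le> a} = ev M (j+m) k0 l {c. real (c (t - (j+m) + 1)) / 2^l \<le> a}"
          using le_set_ev[of "j+m" t k0] t unfolding k0_def by auto
        then have "{\<omega>\<in>space M. real (idx l (coord t \<omega>)) / 2^l \<le> a} \<in> G M (j+m) k0 l" unfolding G_def by blast
        also have "\<dots> \<subseteq> G M (j+m) (max k0 l) (max k0 l)" by (rule G_mono[OF S]) auto
        finally show "\<exists>k. {\<omega>\<in>space M. real (idx l (coord t \<omega>)) / 2^l \<le> a} \<in> G M (j+m) k k" by blast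
      qed
      then show ?thesis using UV(2) by blast
    qed
    have "\<forall>e>0. \<exists>K. \<forall>k\<ge>K. \<exists>W'\<in>G M (j+m) k k. measure M (sym_diff V W') < e"
    proof (rule approx_sigma[where C="(\<lambda>k. G M (j+m) k k)", OF P _ _ _ _ _ Vsig])
      show "\<And>k. (\<lambda>k. G M (j+m) k k) k \<subseteq> sets M" by (rule G_sets[OF S])
      show "\<And>k. {} \<in> (\<lambda>k. G M (j+m) k k) k" by (rule G_empty)
      show "\<And>k A. A \<in> (\<lambda>k. G M (j+m) k k) k \<Longrightarrow> space M - A \<in> (\<lambda>k. G M (j+m) k k) k" by (rule G_compl)
      show "\<And>k A B. A \<in> (\<lambda>k. G M (j+m) k k) k \<Longrightarrow> B \<in> (\<lambda>k. G M (j+m) k k) k \<Longrightarrow> A \<union> B \<in> (\<lambda>k. G M (j+m) k k) k" by (rule G_un)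
      show "\<And>k k'. k \<le> k' \<Longrightarrow> (\<lambda>k. G M (j+m) k k) k \<subseteq> (\<lambda>k. G M (j+m) k k) k'" by (simp add: G_mono[OF S])
    qed
    then obtain K2 where K2: "\<forall>k\<ge>K2. \<exists>W'\<in>G M (j+m) k k. measure M (sym_diff V W') < e/8"
      using e by (meson divide_pos_pos zero_less_numeral)
    define N where "N = K1 + K2 + j + m + 1"
    have "\<forall>l\<ge>N. \<forall>n\<ge>N. dist (alpha_dyad M l m n) \<alpha> < e"
    proof (intro allI impI)
      fix l n assume l: "l \<ge> N" and n: "n \<ge> N"
      have nm: "n > m" using n unfolding N_def by simp
      have jn: "1 \<le> j" "j \<le> n - m" using j(1) n unfolding N_def by auto
      define j' where "j' = n - m - j + 1"
      have lK1: "l \<ge> K1" using l unfolding N_def by simp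
      obtain U' where U': "U' \<in> G M 1 j l" "measure M (sym_diff U U') < e/8"
        using K1 lK1 by blast
      define k where "k = min j' l"
      have kK: "k \<ge> K2" using l n unfolding k_def j'_def N_def by auto
      obtain V' where V': "V' \<in> G M (j+m) k k" "measure M (sym_diff V V') < e/8"
        using K2 kK by blast
      have "V' \<in> G M (j+m) j' l" using V'(1) G_mono[OF S, of k j' k l "j+m"] unfolding k_def by auto
      then obtain S2 where S2: "V' = ev M (j+m) j' l S2" unfolding G_def by auto
      obtain S1 where S1: "U' = ev M 1 j l S1" using U'(1) unfolding G_def by auto
      have Us: "U \<in> sets M" "V \<in> sets M" using UV(1,2) sigma_gen_sub[OF S] by auto
      have U's: "U' \<in> sets M" "V' \<in> sets M" using U'(1) V'(1) G_sets[OF S] by auto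
      have "fd M U V \<le> fd M U' V' + 2 * (measure M (sym_diff U U') + measure M (sym_diff V V'))"
        by (rule fd_perturb[OF P Us U's])
      moreover have "fd M U' V' \<le> alpha_dyad M l m n"
        unfolding S1 S2 j'_def by (rule LB[OF S jn])
      moreover have "2 * (measure M (sym_diff U U') + measure M (sym_diff V V')) < e/2"
      proof -
        have ar: "\<And>a b::real. a < e/8 \<Longrightarrow> b < e/8 \<Longrightarrow> 2 * (a + b) < e/2" by (simp add: field_simps)
        show ?thesis by (rule ar[OF U'(2) V'(2)])
      qed
      ultimately have lo: "\<alpha> - e < alpha_dyad M l m n" using UV(3)
        by (rule arith_aux)
      have hi: "alpha_dyad M l m n \<le> \<alpha>" unfolding \<alpha>_def by (rule UB[OF P S nm])
      show "dist (alpha_dyad M l m n) \<alpha> < e" using lo hi by (simp add: dist_real_def)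
    qed
    then show ?thesis by blast
  qed
  show ?thesis
    unfolding \<alpha>_def[symmetric]
  proof (rule tendstoI)
    fix e :: real assume "e > 0"
    then obtain N where N: "\<forall>l\<ge>N. \<forall>n\<ge>N. dist (alpha_dyad M l m n) \<alpha> < e" using main by blast
    show "\<forall>\<^sub>F x in sequentially \<times>\<^sub>F sequentially. dist ((\<lambda>(n, l). alpha_dyad M l m n) x) \<alpha> < e"
      unfolding eventually_prod_sequentially using N by auto
  qed
qed

end
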